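(* Let $P_S,H_{SR},H_{SD},H_{RD},\sigma_a^2,\sigma_b^2>0$, $\eta\in(0,1]$, assume $\sigma_R^2=\sigma_D^2=\sigma_a^2+\sigma_b^2$ and $H_{SR}>H_{SD}$, and let $\rho^{\mathrm{th}}=1-\frac{H_{SD}\sigma_b^2}{H_{SR}\sigma_D^2-H_{SD}\sigma_a^2}$. Fix $\rho\in(0,\rho^{\mathrm{th}})$ and set $C^{(PS)}_{SR}=\log\big(1+\frac{(1-\rho)P_SH_{SR}}{(1-\rho)\sigma_a^2+\sigma_b^2}\big)$, $b=C_{SD}=\log(1+P_SH_{SD}/\sigma_D^2)$, $a'=C^{(PS)}_{SR}-C_{SD}$, $c'=\eta\rho H_{SR}H_{RD}P_S/\sigma_D^2$. Then the problem $$\max_{\lambda\in(0,1)}\min\Big\{\lambda C^{(PS)}_{SR},\ \lambda b+(1-\lambda)\Big(b+\log\Big(1+\frac{c'\lambda}{1-\lambda}\Big)\Big)\Big\}$$ is solved by $\lambda^*=\max\{\lambda_1,\lambda_2\}$, where $$\lambda_1=\frac{-\frac{1}{a'}\mathcal W_{-1}\!\big(-\frac{a'}{c'}e^{-b-\frac{a'}{c'}}\big)-\frac1{c'}}{1-\frac{1}{a'}\mathcal W_{-1}\!\big(-\frac{a'}{c'}e^{-b-\frac{a'}{c'}}\big)-\frac1{c'}},\qquad \lambda_2=\frac{e^{\mathcal W_0(\frac{c'-1}{e})+1}-1}{e^{\mathcal W_0(\frac{c'-1}{e})+1}+c'-1}.$$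
   Context: $\log$ is the natural logarithm; $\mathcal W_0,\mathcal W_{-1}$ are the principal and lower real branches of the Lambert W function. This is the power-splitting (PS) relay protocol with mutual-information accumulation at the destination for a fixed power-splitting ratio $\rho$ (fraction of received power used for energy harvesting), with relay forwarding power $\eta\rho H_{SR}P_S\lambda/(1-\lambda)$; $\lambda$ is the broadcast time fraction. $\sigma_a^2,\sigma_b^2$ are antenna and signal-processing noise powers at the relay. *)

theory Defs
  imports Complex_Main
begin

text \<open>Real branches of the Lambert W function.
  Principal branch: for x \<ge> -1/e, the unique w \<ge> -1 with w e^w = x.
  Lower branch: for -1/e \<le> x < 0, the unique w \<le> -1 with w e^w = x.\<close>

definition lambertW0 :: "real \<Rightarrow> real" where
  "lambertW0 x = (THE w. -1 \<le> w \<and> w * exp w = x)"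

definition lambertWm1 :: "real \<Rightarrow> real" where
  "lambertWm1 x = (THE w. w \<le> -1 \<and> w * exp w = x)"

end

theory Submission
  imports Defs
begin

lemma exp_strict: fixes t :: real assumes "t \<noteq> 0" shows "1 + t < exp t"
proof (cases "1 + t/2 \<ge> 0")
  case True
  have "(1 + t/2)^2 \<le> exp (t/2) ^ 2"
    using True exp_ge_add_one_self[of "t/2"] by (intro power_mono) auto
  also have "exp (t/2) ^ 2 = exp t" by (simp add: power2_eq_square flip: exp_add)
  finally have "(1 + t/2)^2 \<le> exp t" .
  moreover have "(1 + t/2)^2 = 1 + t + t^2/4" by (simp add: power2_eq_square algebra_simps)
  moreover have "0 < t^2" using assms by simp
  ultimately show ?thesis by linarith
next
  case False
  then have "1 + t < 0" by linarith
  then show ?thesis using exp_gt_zero[of t] by linarith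
qed

lemma exp_sq4: fixes T :: real assumes "T \<ge> 0" shows "T^2/4 \<le> exp T"
proof -
  have "(T/2)^2 \<le> (1 + T/2)^2" using assms by (intro power_mono) auto
  also have "\<dots> \<le> exp (T/2) ^ 2"
    using assms exp_ge_add_one_self[of "T/2"] by (intro power_mono) auto
  also have "exp (T/2) ^ 2 = exp T" by (simp add: power2_eq_square flip: exp_add)
  finally show ?thesis by (simp add: power2_eq_square)
qed

lemma L1: fixes u v :: real assumes "u < v" "v \<le> -1" shows "v * exp v < u * exp u"
proof -
  define t where "t = v - u"
  have t: "t > 0" using assms t_def by simp
  have "t < exp t - 1" using exp_strict[of t] t by linarith
  also have "\<dots> \<le> (-v) * (exp t - 1)" using mult_right_mono[of 1 "-v" "exp t - 1"] assms t by simp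
  finally have key: "v * exp t < v - t" by (simp add: algebra_simps)
  have "u = v - t" using t_def by simp
  have "v * exp v = v * exp t * exp u" using \<open>u = v - t\<close> by (simp flip: exp_add)
  also have "\<dots> < (v - t) * exp u" using key by (intro mult_strict_right_mono) auto
  finally show ?thesis using \<open>u = v - t\<close> by simp
qed

lemma L2: fixes u v :: real assumes "-1 \<le> u" "u < v" shows "u * exp u < v * exp v"
proof -
  define t where "t = v - u"
  have t: "t > 0" using assms t_def by simp
  have e: "1 - t < exp (-t)" using exp_strict[of "-t"] t by simp
  have key: "(v - t) * exp (-t) < v"
  proof (cases "v - t < 0")
    case True
    have "(v - t) * exp (-t) < (v - t) * (1 - t)"
      using True e by (intro mult_strict_left_mono_neg) auto
    also have "\<dots> = v + t * (-u - 1)" by (simp add: t_def algebra_simps)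
    also have "\<dots> \<le> v" using assms t by (simp add: mult_nonneg_nonpos)
    finally show ?thesis .
  next
    case False
    then have "(v - t) * exp (-t) \<le> (v - t) * 1" using t by (intro mult_left_mono) auto
    then show ?thesis using t by simp
  qed
  have "u = v - t" using t_def by simp
  have "u * exp u = (v - t) * exp (-t) * exp v" using \<open>u = v - t\<close> by (simp flip: exp_add)
  also have "\<dots> < v * exp v" using key by (intro mult_strict_right_mono) auto
  finally show ?thesis .
qed

lemma Wm1: fixes x :: real assumes "- exp (-1) \<le> x" "x < 0"
  shows "lambertWm1 x \<le> -1 \<and> lambertWm1 x * exp (lambertWm1 x) = x"
proof -
  define T where "T = max 1 (-4/x)"
  have T1: "T \<ge> 1" "T \<ge> -4/x" using T_def by auto
  have xm: "-x > 0" using assms by simp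
  have "(-x) * (-4/x) \<le> (-x) * T" using T1(2) xm by (intro mult_left_mono) auto
  moreover have "(-x) * (-4/x) = 4" using assms by simp
  ultimately have h4: "4 \<le> (-x) * T" by linarith
  have "T * 4 \<le> T * ((-x) * T)" using h4 T1 by (intro mult_left_mono) auto
  moreover have "(-x) * (T^2/4) = T * ((-x) * T) / 4" by (simp add: power2_eq_square algebra_simps)
  ultimately have "T \<le> (-x) * (T^2/4)" by linarith
  also have "\<dots> \<le> (-x) * exp T" using exp_sq4[of T] T1 xm by (intro mult_left_mono) auto
  finally have "T \<le> (-x) * exp T" .
  then have "T / exp T \<le> -x" by (simp add: divide_le_eq)
  then have f1: "x \<le> (-T) * exp (-T)" by (simp add: exp_minus divide_inverse)
  have f2: "(-1) * exp (-1) \<le> x" using assms by simp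
  have cont: "\<forall>w. -T \<le> w \<and> w \<le> -1 \<longrightarrow> isCont (\<lambda>w. w * exp w) w"
    by (auto intro!: isCont_mult isCont_exp')
  have "\<exists>w. -T \<le> w \<and> w \<le> -1 \<and> w * exp w = x"
    by (rule IVT2[where f="\<lambda>w. w * exp w", OF _ _ _ cont]) (use f1 f2 T1 in auto)
  then obtain w where w: "w \<le> -1" "w * exp w = x" by blast
  have uniq: "v = w" if "v \<le> -1" "v * exp v = x" for v
  proof (rule ccontr)
    assume "v \<noteq> w"
    then consider "v < w" | "w < v" by linarith
    then show False
    proof cases
      case 1 then show False using L1[of v w] w that by simp
    next
      case 2 then show False using L1[of w v] w that by simp
    qed
  qed
  have "lambertWm1 x = w" unfolding lambertWm1_def
    apply (rule the_equality) using w uniq by blast+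
  then show ?thesis using w by simp
qed

lemma W0: fixes x :: real assumes "- exp (-1) \<le> x"
  shows "-1 \<le> lambertW0 x \<and> lambertW0 x * exp (lambertW0 x) = x"
proof -
  define B where "B = max 0 x"
  have f1: "x \<le> B * exp B"
  proof (cases "x \<ge> 0")
    case True
    then have "x * 1 \<le> x * exp x" by (intro mult_left_mono) auto
    then show ?thesis using True B_def by simp
  next
    case False then show ?thesis using B_def by simp
  qed
  have f2: "(-1) * exp (-1) \<le> x" using assms by simp
  have cont: "\<forall>w. -1 \<le> w \<and> w \<le> B \<longrightarrow> isCont (\<lambda>w. w * exp w) w"
    by (auto intro!: isCont_mult isCont_exp')
  have "\<exists>w. -1 \<le> w \<and> w \<le> B \<and> w * exp w = x"
    by (rule IVT[where f="\<lambda>w. w * exp w", OF _ _ _ cont]) (use f1 f2 B_def in auto)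
  then obtain w where w: "-1 \<le> w" "w * exp w = x" by blast
  have uniq: "v = w" if "-1 \<le> v" "v * exp v = x" for v
  proof (rule ccontr)
    assume "v \<noteq> w"
    then consider "v < w" | "w < v" by linarith
    then show False
    proof cases
      case 1 then show False using L2[of v w] w that by simp
    next
      case 2 then show False using L2[of w v] w that by simp
    qed
  qed
  have "lambertW0 x = w" unfolding lambertW0_def
    apply (rule the_equality) using w uniq by blast+
  then show ?thesis using w by simp
qed

lemma lamY: fixes y c :: real assumes "y > 1" "c > 0"
  shows "0 < (y-1)/(y+c-1) \<and> (y-1)/(y+c-1) < 1 \<and> 1 + c*((y-1)/(y+c-1))/(1-(y-1)/(y+c-1)) = y"
proof -
  have p: "y + c - 1 > 0" using assms by simp
  have e: "1 - (y-1)/(y+c-1) = c/(y+c-1)" using p by (simp add: field_simps)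
  have "c*((y-1)/(y+c-1))/(1-(y-1)/(y+c-1)) = c*((y-1)/(y+c-1))/(c/(y+c-1))" by (simp only: e)
  also have "\<dots> = y - 1"
  proof (subst nonzero_divide_eq_eq)
    show "c / (y + c - 1) \<noteq> 0" using p assms by simp
    show "c * ((y - 1) / (y + c - 1)) = (y - 1) * (c / (y + c - 1))" by simp
  qed
  finally have e2: "c*((y-1)/(y+c-1))/(1-(y-1)/(y+c-1)) = y - 1" .
  moreover have "(y-1)/(y+c-1) < 1" using p assms by (simp add: divide_less_eq)
  ultimately show ?thesis using assms p by simp
qed

lemma Ymono: fixes l m c :: real assumes "0 < l" "l \<le> m" "m < 1" "c > 0"
  shows "1 + c*l/(1-l) \<le> 1 + c*m/(1-m)"
proof -
  have "l/(1-l) \<le> m/(1-m)" using assms by (simp add: field_simps)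
  then have "c*(l/(1-l)) \<le> c*(m/(1-m))" using assms by (intro mult_left_mono) auto
  then show ?thesis by simp
qed

lemma Ygt1: fixes l c :: real assumes "0 < l" "l < 1" "c > 0" shows "1 < 1 + c*l/(1-l)"
  using assms by simp

lemma rep1: fixes l c L :: real assumes "0 < l" "l < 1" "c > 0"
  shows "(1-l)*L = c * (L / ((1 + c*l/(1-l)) + c - 1))"
  using assms by (simp add: field_simps)

lemma rep2: fixes l c L a b :: real assumes "0 < l" "l < 1" "c > 0"
  shows "l*(b + a) - (b + (1-l)*L) = (1-l)*((a/c)*((1 + c*l/(1-l)) - 1) - b - L)"
  using assms by (simp add: field_simps)

lemma ln_tan: fixes y z :: real assumes "y > 0" "z > 0" shows "ln z \<le> ln y + (z - y)/y"
proof -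
  have "ln (z/y) \<le> z/y - 1" using assms by (intro ln_le_minus_one) auto
  moreover have "ln (z/y) = ln z - ln y" using assms by (simp add: ln_div)
  moreover have "z/y - 1 = (z-y)/y" using assms by (simp add: field_simps)
  ultimately show ?thesis by simp
qed

lemma Gmax: fixes c y y2 :: real assumes "c > 0" "y > 1" "y2 > 1" "ln y2 = 1 + (c-1)/y2"
  shows "ln y/(y+c-1) \<le> ln y2/(y2+c-1)"
proof -
  have "ln y \<le> ln y2 + (y - y2)/y2" using assms by (intro ln_tan) auto
  also have "\<dots> = (y + c - 1)/y2" using assms by (simp add: field_simps)
  finally have "ln y \<le> (y + c - 1)/y2" .
  then have "ln y/(y+c-1) \<le> 1/y2" using assms by (simp add: field_simps)
  moreover have "ln y2/(y2+c-1) = 1/y2" using assms by (simp add: field_simps)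
  ultimately show ?thesis by simp
qed

lemma Gmono: fixes c y y2 z :: real assumes "c > 0" "y2 > 1" "y2 \<le> y" "y \<le> z" "ln y2 = 1 + (c-1)/y2"
  shows "ln z/(z+c-1) \<le> ln y/(y+c-1)"
proof -
  have y: "y > 1" "z > 1" using assms by auto
  have "ln y2 \<le> ln y + (y2 - y)/y" using assms y by (intro ln_tan) auto
  moreover have "(y2 - y)/y = - ((y - y2)/y)" by (simp add: diff_divide_distrib)
  ultimately have h1: "ln y \<ge> 1 + (c-1)/y2 + (y - y2)/y" using assms(5) by linarith
  have "1 + (c-1)/y2 + (y - y2)/y - (1 + (c-1)/y) = (y - y2)*(y2 + c - 1)/(y*y2)"
    using y assms by (simp add: field_simps)
  also have "\<dots> \<ge> 0" using y assms by (intro divide_nonneg_pos mult_nonneg_nonneg) auto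
  finally have psi: "1 + (c-1)/y \<le> ln y" using h1 by linarith
  have t: "ln z \<le> ln y + (z - y)/y" using y by (intro ln_tan) auto
  have "ln z * (y + c - 1) \<le> (ln y + (z - y)/y) * (y + c - 1)"
    using t y assms by (intro mult_right_mono) auto
  also have "\<dots> = ln y * (y + c - 1) + (z - y) * (1 + (c-1)/y)" using y by (simp add: field_simps)
  also have "\<dots> \<le> ln y * (y + c - 1) + (z - y) * ln y"
    using psi assms by (intro add_left_mono mult_left_mono) auto
  also have "\<dots> = ln y * (z + c - 1)" by (simp add: algebra_simps)
  finally have "ln z * (y + c - 1) \<le> ln y * (z + c - 1)" .
  then show ?thesis using y assms by (simp add: divide_le_eq le_divide_eq field_simps)
qed

lemma Hpos: fixes k b y1 y :: real assumes "k > 0" "y1 > 0" "k*y1 \<ge> 1" "ln y1 = k*(y1-1) - b" "y1 \<le> y"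
  shows "0 \<le> k*(y-1) - b - ln y"
proof -
  have "ln y \<le> ln y1 + (y - y1)/y1" using assms by (intro ln_tan) auto
  moreover have "1/y1 \<le> k" using assms by (simp add: divide_le_eq mult.commute)
  then have "(y - y1)*(1/y1) \<le> (y - y1)*k" using assms by (intro mult_left_mono) auto
  ultimately have "ln y \<le> ln y1 + (y-y1)*k" by simp
  then show ?thesis using assms(4) by (simp add: algebra_simps)
qed


theorem corollary1:
  fixes P_S H_SR H_SD H_RD sa2 sb2 sR2 sD2 eta rho rho_th :: real
    and C_SR b a' c' lam1 lam2 :: real
    and f :: "real \<Rightarrow> real"
  assumes pos: "P_S > 0" "H_SR > 0" "H_SD > 0" "H_RD > 0" "sa2 > 0" "sb2 > 0"
    and eta: "0 < eta" "eta \<le> 1"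
    and noise: "sR2 = sa2 + sb2" "sD2 = sa2 + sb2"
    and gain: "H_SR > H_SD"
    and rho_th_def: "rho_th = 1 - (H_SD * sb2) / (H_SR * sD2 - H_SD * sa2)"
    and rho: "0 < rho" "rho < rho_th"
    and C_SR_def: "C_SR = ln (1 + ((1 - rho) * P_S * H_SR) / ((1 - rho) * sa2 + sb2))"
    and b_def: "b = ln (1 + P_S * H_SD / sD2)"
    and a'_def: "a' = C_SR - b"
    and c'_def: "c' = eta * rho * H_SR * H_RD * P_S / sD2"
    and f_def: "\<And>lam. f lam = min (lam * C_SR)
                  (lam * b + (1 - lam) * (b + ln (1 + c' * lam / (1 - lam))))"
    and lam1_def: "lam1 =
        (- (1 / a') * lambertWm1 (- (a' / c') * exp (- b - a' / c')) - 1 / c') /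
        (1 - (1 / a') * lambertWm1 (- (a' / c') * exp (- b - a' / c')) - 1 / c')"
    and lam2_def: "lam2 =
        (exp (lambertW0 ((c' - 1) / exp 1) + 1) - 1) /
        (exp (lambertW0 ((c' - 1) / exp 1) + 1) + c' - 1)"
  shows "max lam1 lam2 \<in> {0<..<1} \<and>
         (\<forall>lam \<in> {0<..<1}. f lam \<le> f (max lam1 lam2))"
proof -
  have sD: "sD2 > 0" using noise pos by simp
  have D: "H_SR * sD2 - H_SD * sa2 > 0"
  proof -
    have "H_SD * sa2 < H_SR * sa2" using gain pos by simp
    also have "\<dots> \<le> H_SR * sD2" using pos noise by simp
    finally show ?thesis by simp
  qed
  have qpos: "(H_SD * sb2) / (H_SR * sD2 - H_SD * sa2) > 0" using D pos by simp
  have r: "1 - rho > 0" using rho rho_th_def qpos by linarith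
  have "H_SD * sb2 / (H_SR * sD2 - H_SD * sa2) < 1 - rho" using rho rho_th_def by linarith
  then have "H_SD * sb2 < (1 - rho) * (H_SR * sD2 - H_SD * sa2)" using D by (simp add: divide_less_eq)
  then have ineq: "H_SD * ((1-rho)*sa2 + sb2) < (1-rho)*H_SR*sD2" by (simp add: algebra_simps)
  define den where "den = (1-rho)*sa2 + sb2"
  have den: "den > 0" using r pos unfolding den_def by (simp add: add_pos_pos)
  have "P_S * (H_SD * den) < P_S * ((1-rho)*H_SR*sD2)" using ineq pos unfolding den_def
    by (intro mult_strict_left_mono) auto
  then have "P_S * H_SD * den < ((1 - rho) * P_S * H_SR) * sD2" by (simp add: algebra_simps)
  then have lt: "P_S * H_SD / sD2 < ((1 - rho) * P_S * H_SR) / den"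
    using den sD by (simp add: divide_less_eq less_divide_eq mult.commute mult.left_commute)
  have q0: "P_S * H_SD / sD2 > 0" using pos sD by simp
  have bpos: "b > 0" unfolding b_def using q0 by simp
  have "b < C_SR" unfolding b_def C_SR_def den_def[symmetric] using lt q0 by simp
  then have apos: "a' > 0" using a'_def by simp
  have CSR: "C_SR = b + a'" using a'_def by simp
  have cpos: "c' > 0" unfolding c'_def using pos eta rho sD by simp
  define k where "k = a'/c'"
  have kpos: "k > 0" using apos cpos k_def by simp
  define x1 where "x1 = - (a' / c') * exp (- b - a' / c')"
  have x1k: "x1 = - (k * exp (-b - k))" using x1_def k_def by simp
  have x1neg: "x1 < 0" using x1k kpos by simp
  have "k \<le> exp (k - 1)" using exp_ge_add_one_self[of "k - 1"] by simp
  then have "k * exp (-k) \<le> exp (k-1) * exp (-k)" by (intro mult_right_mono) auto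
  also have "\<dots> = exp (-1)" by (simp flip: exp_add)
  finally have kk: "k * exp (-k) \<le> exp (-1)" .
  have "exp (-b - k) \<le> exp (-k)" using bpos by simp
  then have "k * exp (-b - k) \<le> k * exp (-k)" using kpos by (intro mult_left_mono) auto
  then have x1ge: "- exp (-1) \<le> x1" using kk x1k by linarith
  define w1 where "w1 = lambertWm1 x1"
  have w1: "w1 \<le> -1" "w1 * exp w1 = x1" using Wm1[OF x1ge x1neg] w1_def by auto
  define y1 where "y1 = - w1 / k"
  have w1y: "w1 = - (k * y1)" using y1_def kpos by simp
  have ky1: "k * y1 \<ge> 1" using w1 w1y by simp
  have y1pos: "y1 > 0" using ky1 kpos zero_less_mult_pos[of k y1] by simp
  have "(k * y1) * exp (- (k * y1)) = k * exp (-b - k)" using w1 w1y x1k by simp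
  then have "y1 * exp (- (k * y1)) = exp (-b - k)" using kpos by simp
  then have "ln (y1 * exp (- (k * y1))) = -b - k" by simp
  then have "ln y1 - k * y1 = -b - k" using y1pos by (simp add: ln_mult)
  then have lny1: "ln y1 = k * (y1 - 1) - b" by (simp add: algebra_simps)
  have y1gt: "y1 > 1"
  proof (rule ccontr)
    assume "\<not> y1 > 1"
    then have y1le: "y1 \<le> 1" by simp
    have "ln (1/y1) \<le> 1/y1 - 1" using y1pos by (intro ln_le_minus_one) auto
    then have "1 - 1/y1 \<le> ln y1" using y1pos by (simp add: ln_div)
    then have "1 - 1/y1 \<le> k * (y1 - 1) - b" using lny1 by simp
    moreover have "(y1 - 1) * (k - 1/y1) = k * (y1 - 1) - 1 + 1/y1"
      using y1pos by (simp add: algebra_simps add_divide_distrib[symmetric])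
    ultimately have "0 < (y1 - 1) * (k - 1/y1)" using bpos by linarith
    moreover have "k - 1/y1 \<ge> 0" using ky1 y1pos by (simp add: divide_le_eq mult.commute)
    moreover have "y1 - 1 \<le> 0" using y1le by simp
    ultimately have "(y1 - 1) * (k - 1/y1) \<le> 0" using mult_nonpos_nonneg by blast
    then show False using \<open>0 < (y1 - 1) * (k - 1/y1)\<close> by simp
  qed
  have lam1_eq: "lam1 = (y1 - 1)/(y1 + c' - 1)"
  proof -
    have e: "(1 / a') * lambertWm1 (- (a' / c') * exp (- b - a' / c')) = - (y1 / c')"
      using w1y w1_def x1_def k_def apos cpos by simp
    have e2: "- (1 / a') * lambertWm1 (- (a' / c') * exp (- b - a' / c')) = y1 / c'"
      using e by simp
    have "lam1 = (y1/c' - 1/c') / (1 - (- (y1/c')) - 1/c')" by (simp only: lam1_def e e2)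
    then have "lam1 = (y1/c' - 1/c') / (1 + y1/c' - 1/c')" by simp
    also have "\<dots> = ((y1 - 1)/c')/((y1 + c' - 1)/c')"
    proof -
      have d: "1 + y1/c' - 1/c' = (y1+c'-1)/c'" using cpos by (simp add: field_simps)
      have n: "y1/c' - 1/c' = (y1-1)/c'" by (simp add: diff_divide_distrib)
      show ?thesis by (simp only: d n)
    qed
    also have "\<dots> = (y1 - 1)/(y1 + c' - 1)" using cpos by simp
    finally show ?thesis .
  qed
  define x2 where "x2 = (c' - 1) / exp 1"
  have "(-1)/exp 1 \<le> (c'-1)/exp 1" using cpos by (intro divide_right_mono) auto
  moreover have "- exp (-1) = (-1) / (exp 1 :: real)" by (subst exp_minus) (simp add: inverse_eq_divide)
  ultimately have x2ge: "- exp (-1) \<le> x2" unfolding x2_def by simp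
  define v where "v = lambertW0 x2"
  have v: "-1 \<le> v" "v * exp v = x2" using W0[OF x2ge] v_def by auto
  have vgt: "v > -1"
  proof (rule ccontr)
    assume "\<not> v > -1"
    then have "v = -1" using v by simp
    then have "x2 = - exp (-1)" using v by simp
    moreover have "- exp (-1) = (-1) / (exp 1 :: real)" by (subst exp_minus) (simp add: inverse_eq_divide)
    ultimately have "(c' - 1) / exp 1 = (-1) / exp 1" unfolding x2_def by simp
    then have "c' - 1 = -1" by (metis divide_cancel_right exp_not_eq_zero)
    then show False using cpos by simp
  qed
  define y2 where "y2 = exp (v + 1)"
  have y2gt: "y2 > 1" using vgt y2_def by simp
  have "v * exp v * exp 1 = c' - 1" using v x2_def by simp
  then have "v * y2 = c' - 1" unfolding y2_def by (simp add: exp_add)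
  then have "v = (c' - 1)/y2" using y2gt by (simp add: eq_divide_eq)
  then have lny2: "ln y2 = 1 + (c' - 1)/y2" unfolding y2_def by simp
  have lam2_eq: "lam2 = (y2 - 1)/(y2 + c' - 1)" unfolding lam2_def y2_def v_def x2_def by simp
  define Y where "Y l = 1 + c' * l / (1 - l)" for l
  define g where "g l = b + (1 - l) * ln (Y l)" for l
  have fg: "f l = min (l * C_SR) (g l)" for l
    unfolding f_def g_def Y_def by (simp add: algebra_simps)
  have gY: "g l = b + c' * (ln (Y l) / (Y l + c' - 1))" if "0 < l" "l < 1" for l
    using rep1[OF that cpos, of "ln (Y l)"] unfolding g_def Y_def by simp
  have diff: "l * C_SR - g l = (1 - l) * (k * (Y l - 1) - b - ln (Y l))" if "0 < l" "l < 1" for l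
    using rep2[OF that cpos, of b a' "ln (Y l)"] unfolding g_def Y_def CSR k_def by simp
  have Ygt: "Y l > 1" if "0 < l" "l < 1" for l using Ygt1[OF that cpos] Y_def by simp
  have Ymon: "Y l \<le> Y m" if "0 < l" "l \<le> m" "m < 1" for l m using Ymono[OF that cpos] Y_def by simp
  have L1p: "0 < lam1" "lam1 < 1" "Y lam1 = y1" using lamY[OF y1gt cpos] lam1_eq Y_def by auto
  have L2p: "0 < lam2" "lam2 < 1" "Y lam2 = y2" using lamY[OF y2gt cpos] lam2_eq Y_def by auto
  have gmax: "g l \<le> g lam2" if "0 < l" "l < 1" for l
  proof -
    have "ln (Y l) / (Y l + c' - 1) \<le> ln y2 / (y2 + c' - 1)"
      using Gmax[OF cpos Ygt[OF that] y2gt lny2] .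
    then have "c' * (ln (Y l) / (Y l + c' - 1)) \<le> c' * (ln y2 / (y2 + c' - 1))"
      using cpos by (intro mult_left_mono) auto
    then show ?thesis using gY[OF that] gY[OF L2p(1,2)] L2p(3) by simp
  qed
  have gmono: "g m \<le> g l" if "0 < l" "l \<le> m" "m < 1" "lam2 \<le> l" for l m
  proof -
    have l1: "l < 1" "0 < m" using that by auto
    have "y2 \<le> Y l" using Ymon[OF L2p(1) that(4)] L2p(3) that by simp
    then have "ln (Y m) / (Y m + c' - 1) \<le> ln (Y l) / (Y l + c' - 1)"
      using Gmono[OF cpos y2gt _ Ymon[OF that(1-3)] lny2] by simp
    then have "c' * (ln (Y m) / (Y m + c' - 1)) \<le> c' * (ln (Y l) / (Y l + c' - 1))"
      using cpos by (intro mult_left_mono) auto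
    then show ?thesis using gY[OF that(1) l1(1)] gY[OF l1(2) that(3)] by simp
  qed
  have hpos: "g l \<le> l * C_SR" if "lam1 \<le> l" "l < 1" for l
  proof -
    have l0: "0 < l" using L1p that by simp
    have "y1 \<le> Y l" using Ymon[OF L1p(1) that] L1p(3) by simp
    then have "0 \<le> k * (Y l - 1) - b - ln (Y l)" using Hpos[OF kpos y1pos ky1 lny1] by simp
    then have "0 \<le> (1 - l) * (k * (Y l - 1) - b - ln (Y l))" using that by simp
    then show ?thesis using diff[OF l0 that(2)] by simp
  qed
  have eq1: "lam1 * C_SR = g lam1"
    using diff[OF L1p(1,2)] L1p(3) lny1 by simp
  have Cnn: "C_SR \<ge> 0" using CSR bpos apos by simp
  show ?thesis
  proof (cases "lam2 \<le> lam1")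
    case True
    then have M: "max lam1 lam2 = lam1" by simp
    have fl1: "f lam1 = lam1 * C_SR" using fg eq1 by simp
    have "f l \<le> f lam1" if "0 < l" "l < 1" for l
    proof (cases "l \<le> lam1")
      case True
      have "f l \<le> l * C_SR" using fg by simp
      also have "\<dots> \<le> lam1 * C_SR" using True Cnn by (intro mult_right_mono) auto
      finally show ?thesis using fl1 by simp
    next
      case False
      have "f l \<le> g l" using fg by simp
      also have "\<dots> \<le> g lam1" using gmono[OF L1p(1) _ that(2) \<open>lam2 \<le> lam1\<close>] False by simp
      finally show ?thesis using fl1 eq1 by simp
    qed
    then show ?thesis using M L1p by auto
  next
    case False
    then have M: "max lam1 lam2 = lam2" by simp
    have "lam1 \<le> lam2" using False by simp
    then have gl: "g lam2 \<le> lam2 * C_SR" using hpos[of lam2] L2p(2) by blast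
    have fl2: "f lam2 = g lam2" unfolding fg using gl by (simp add: min_def)
    have "f l \<le> f lam2" if "0 < l" "l < 1" for l
    proof -
      have "f l \<le> g l" using fg by simp
      also have "\<dots> \<le> g lam2" using gmax[OF that] .
      finally show ?thesis using fl2 by simp
    qed
    then show ?thesis unfolding M using L2p by simp
  qed
qed

end
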